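(* Let $\sigma$ be a sequence of transitions such that $G_\sigma$ has no negative cycle, let $H=|G_\sigma|$, and let $k\ge 1$. If there is a complete p-tree with root labelled $(x,y)$, weight $w$ and height at most $k$, then in the $2k$-fold composition $H^{\odot 2k}=H\odot\cdots\odot H$ (whose columns are $0,\dots,4k-1$, the $l$-th copy of $H$ occupying columns $2l-2$ and $2l-1$) there is a path from $(2k-1,x)$ to $(2k-1,y)$ of weight at most $w$; hence the minimal weight of such a path is at most $w$.
   Context: Fix a finite set of clocks $X=\{x_0,\dots,x_m\}$ and a finite sequence $\sigma$ of timed-automaton transitions over $X$. A weight is a pair $(\preccurlyeq,d)$ with $\preccurlyeq\in\{<,\le\}$, $d\in\mathbb{Z}$; weights are added by $(\preccurlyeq_1,d_1)+(\preccurlyeq_2,d_2)=(\preccurlyeq,d_1+d_2)$, $\preccurlyeq$ being $<$ iff one of $\preccurlyeq_1,\preccurlyeq_2$ is $<$, and totally ordered by $(\preccurlyeq,d)<(\preccurlyeq',d')$ iff $d<d'$, or $d=d'$, $\preccurlyeq$ is $<$ and $\preccurlyeq'$ is $\le$. A weight is negative if it is smaller than $(\le,0)$; the weight of a path is the sum of its edge weights. A transformation graph with $k+1$ columns is a directed graph with vertex set $\{0,\dots,k\}\times X$ with weighted edges. $G_\sigma$ is the transformation graph of $\sigma$ (the composition of the one-transition graphs encoding time elapse, guard and reset of each transition). Composition: if $G_1$ has $k_1$ columns and $G_2$ has $k_2$ columns, $G_1\odot G_2$ has vertex set $\{0,\dots,k_1+k_2-1\}\times X$, the edges of $G_1$,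 the edges of $G_2$ shifted by $k_1$ columns, and for every $x\in X$ edges $(k_1-1,x)\to(k_1,x)$ and $(k_1,x)\to(k_1-1,x)$ of weight $(\le,0)$. The canonical form of a graph $G$ without negative cycles has, for every pair of distinct vertices $u,w$ connected by a path, an edge $u\to w$ weighted by the minimal path weight. $|G|$ is the canonical form of $G$ restricted to its first and last columns, renumbered $0$ and $1$. p-trees (relative to $H=|G_\sigma|$): a p-tree is a finite rooted tree with weighted edges whose nodes are labelled by $\top$ or by pairs $(x,y)\in X\times X$; nodes labelled $\top$ are leaves. A node labelled $(x,y)$ has children of exactly one of the following forms: (a) a single child $\top$, with edge weight $e$, where $H$ has an edge $(c,x)\to(c,y)$ of weight $e$ for some $c\in\{0,1\}$; (b) a single child $(u,v)$, with edge weight $e_1+e_2$, where for some $c,c'\in\{0,1\}$ with $c\ne c'$, $H$ has edges $(c,x)\to(c',u)$ of weight $e_1$ and $(c',v)\to(c,y)$ of weight $e_2$; (c) two children $(x,z)$ and $(z,y)$ for some $z\in X$, both with edge weight $(\le,0)$. The weight of a p-tree is the sum of all its edge weights. A p-tree is complete if all its leaves are labelled $\top$. The height of a tree is the maximal number of edges on a path from the root to a leaf. *)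

theory Defs
  imports Main
begin

text \<open>A weight is a pair (comparison, integer); Strict stands for the symbol <, NonStrict for the symbol \<le>.\<close>
datatype cmp = Strict | NonStrict

type_synonym weight = "cmp \<times> int"

definition wzero :: weight where "wzero = (NonStrict, 0)"

definition wadd :: "weight \<Rightarrow> weight \<Rightarrow> weight" where
  "wadd a b = ((if fst a = Strict \<or> fst b = Strict then Strict else NonStrict), snd a + snd b)"

definition wless :: "weight \<Rightarrow> weight \<Rightarrow> bool" where
  "wless a b \<longleftrightarrow> snd a < snd b \<or> (snd a = snd b \<and> fst a = Strict \<and> fst b = NonStrict)"

definition wle :: "weight \<Rightarrow> weight \<Rightarrow> bool" where
  "wle a b \<longleftrightarrow> wless a b \<or> a = b"

definition negative :: "weight \<Rightarrow> bool" where
  "negative a \<longleftrightarrow> wless a wzero"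

fun wsum :: "weight list \<Rightarrow> weight" where
  "wsum [] = wzero"
| "wsum (a # as) = wadd a (wsum as)"

text \<open>Vertices are (column, clock); edges are triples (source, weight, target).
  The clock set X is a finite type 'x.\<close>
type_synonym 'x vertex = "nat \<times> 'x"
type_synonym 'x edge = "'x vertex \<times> weight \<times> 'x vertex"

record 'x tgraph =
  ncols :: nat
  edges :: "'x edge set"

definition transformation_graph :: "'x tgraph \<Rightarrow> bool" where
  "transformation_graph G \<longleftrightarrow> finite (edges G) \<and>
     (\<forall>(u, e, v) \<in> edges G. fst u < ncols G \<and> fst v < ncols G)"

inductive walk :: "'x edge set \<Rightarrow> 'x vertex \<Rightarrow> 'x edge list \<Rightarrow> 'x vertex \<Rightarrow> bool"
  for E where
  walk_Nil: "walk E u [] u"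
| walk_Cons: "(u, e, v) \<in> E \<Longrightarrow> walk E v es t \<Longrightarrow> walk E u ((u, e, v) # es) t"

definition path_weight :: "'x edge list \<Rightarrow> weight" where
  "path_weight es = wsum (map (\<lambda>(u, e, v). e) es)"

definition no_neg_cycle :: "'x edge set \<Rightarrow> bool" where
  "no_neg_cycle E \<longleftrightarrow> (\<forall>u es. walk E u es u \<and> es \<noteq> [] \<longrightarrow> \<not> negative (path_weight es))"

definition canonical_edges :: "'x edge set \<Rightarrow> 'x edge set" where
  "canonical_edges E = {(u, m, v). u \<noteq> v \<and>
      (\<exists>es. walk E u es v \<and> path_weight es = m) \<and>
      (\<forall>es. walk E u es v \<longrightarrow> wle m (path_weight es))}"

text \<open>|G|: canonical form restricted to first and last column, renumbered 0 and 1.\<close>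
definition renum :: "'x tgraph \<Rightarrow> nat \<Rightarrow> nat" where
  "renum G c = (if c = 0 then 0 else ncols G - 1)"

definition restrict_graph :: "'x tgraph \<Rightarrow> 'x tgraph" where
  "restrict_graph G = \<lparr> ncols = 2,
     edges = {((c, a), m, (c', b)) | c a m c' b. c \<le> 1 \<and> c' \<le> 1 \<and>
                ((renum G c, a), m, (renum G c', b)) \<in> canonical_edges (edges G)} \<rparr>"

definition shift_edges :: "nat \<Rightarrow> 'x edge set \<Rightarrow> 'x edge set" where
  "shift_edges n E = {((fst u + n, snd u), e, (fst v + n, snd v)) | u e v. (u, e, v) \<in> E}"

definition compose :: "'x tgraph \<Rightarrow> 'x tgraph \<Rightarrow> 'x tgraph" where
  "compose G1 G2 = \<lparr> ncols = ncols G1 + ncols G2,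
     edges = edges G1 \<union> shift_edges (ncols G1) (edges G2)
       \<union> {((ncols G1 - 1, x), wzero, (ncols G1, x)) | x. True}
       \<union> {((ncols G1, x), wzero, (ncols G1 - 1, x)) | x. True} \<rparr>"

text \<open>n-fold composition H \<odot> ... \<odot> H (n \<ge> 1).\<close>
fun gpow :: "'x tgraph \<Rightarrow> nat \<Rightarrow> 'x tgraph" where
  "gpow H 0 = H"
| "gpow H (Suc 0) = H"
| "gpow H (Suc (Suc n)) = compose (gpow H (Suc n)) H"

text \<open>A node is PTop (label \<top>) or PNode (x,y) cs with a list of weighted children;
  PNode (x,y) [] is a leaf labelled (x,y).\<close>
datatype 'x ptree = PTop | PNode "'x \<times> 'x" "(weight \<times> 'x ptree) list"

fun root_label :: "'x ptree \<Rightarrow> ('x \<times> 'x) option" where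
  "root_label PTop = None"
| "root_label (PNode l cs) = Some l"

definition children_ok :: "'x tgraph \<Rightarrow> 'x \<Rightarrow> 'x \<Rightarrow> (weight \<times> 'x ptree) list \<Rightarrow> bool" where
  "children_ok H x y cs \<longleftrightarrow> cs = [] \<or>
     (\<exists>e c. c \<le> 1 \<and> ((c, x), e, (c, y)) \<in> edges H \<and> cs = [(e, PTop)]) \<or>
     (\<exists>c c' u v e1 e2 cs'. c \<le> 1 \<and> c' \<le> 1 \<and> c \<noteq> c' \<and>
        ((c, x), e1, (c', u)) \<in> edges H \<and> ((c', v), e2, (c, y)) \<in> edges H \<and>
        cs = [(wadd e1 e2, PNode (u, v) cs')]) \<or>
     (\<exists>z cs1 cs2. cs = [(wzero, PNode (x, z) cs1), (wzero, PNode (z, y) cs2)])"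

fun ptree_ok :: "'x tgraph \<Rightarrow> 'x ptree \<Rightarrow> bool" where
  "ptree_ok H PTop = True"
| "ptree_ok H (PNode (x, y) cs) = (children_ok H x y cs \<and> (\<forall>c \<in> set cs. ptree_ok H (snd c)))"

fun complete :: "'x ptree \<Rightarrow> bool" where
  "complete PTop = True"
| "complete (PNode l cs) = (cs \<noteq> [] \<and> (\<forall>c \<in> set cs. complete (snd c)))"

fun ptree_weight :: "'x ptree \<Rightarrow> weight" where
  "ptree_weight PTop = wzero"
| "ptree_weight (PNode l cs) = wsum (map (\<lambda>(e, t). wadd e (ptree_weight t)) cs)"

fun height :: "'x ptree \<Rightarrow> nat" where
  "height PTop = 0"
| "height (PNode l cs) = foldr max (map (\<lambda>(e, t). Suc (height t)) cs) 0"

end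

theory Submission
  imports Defs
begin

lemma wadd_assoc: "wadd (wadd a b) c = wadd a (wadd b c)"
  by (simp add: wadd_def)
lemma wadd_comm: "wadd a b = wadd b a"
  by (auto simp add: wadd_def)
lemma wadd_left_comm: "wadd a (wadd b c) = wadd b (wadd a c)"
  by (metis wadd_assoc wadd_comm)
lemma wadd_zero[simp]: "wadd a wzero = a" "wadd wzero a = a"
  by (cases a; cases "fst a"; auto simp: wadd_def wzero_def)+

lemmas wac = wadd_assoc wadd_comm wadd_left_comm

lemma walk_append: "walk E u xs v \<Longrightarrow> walk E v ys w \<Longrightarrow> walk E u (xs @ ys) w"
  by (induction rule: walk.induct) (auto intro: walk.intros)

lemma walk_single: "(u, e, v) \<in> E \<Longrightarrow> walk E u [(u, e, v)] v"
  by (auto intro: walk.intros)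

lemma walk_Cons': "(u, e, v) \<in> E \<Longrightarrow> walk E v es t \<Longrightarrow> walk E u ((u, e, v) # es) t"
  by (rule walk_Cons)

lemma path_weight_Nil[simp]: "path_weight [] = wzero"
  by (simp add: path_weight_def)
lemma path_weight_Cons[simp]: "path_weight ((u,e,v) # es) = wadd e (path_weight es)"
  by (simp add: path_weight_def)
lemma path_weight_append[simp]: "path_weight (xs @ ys) = wadd (path_weight xs) (path_weight ys)"
  by (induction xs) (auto simp: path_weight_def wadd_assoc)

lemma gpow_ncols: "ncols H = 2 \<Longrightarrow> ncols (gpow H (Suc n)) = 2 * Suc n"
  by (induction n) (auto simp: compose_def)

lemma gpow_F1: "ncols H = 2 \<Longrightarrow> 1 \<le> l \<Longrightarrow> l \<le> Suc m \<Longrightarrow> ((c,a),e,(c',b)) \<in> edges H \<Longrightarrow>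
   ((c+2*(l-1),a),e,(c'+2*(l-1),b)) \<in> edges (gpow H (Suc m))"
proof (induction m)
  case 0
  then have "l = 1" by simp
  then show ?case using 0(4) by simp
next
  case (Suc m)
  show ?case
  proof (cases "l \<le> Suc m")
    case True
    then show ?thesis using Suc by (simp add: compose_def)
  next
    case False
    then have "l = Suc (Suc m)" using Suc by simp
    have "((c+2*Suc m, a), e, (c'+2*Suc m, b)) \<in> shift_edges (2*Suc m) (edges H)"
      unfolding shift_edges_def using Suc.prems(4) by force
    then show ?thesis using \<open>l = Suc (Suc m)\<close> Suc.prems(1)
      by (simp add: gpow_ncols compose_def)
  qed
qed

lemma gpow_F2: "ncols H = 2 \<Longrightarrow> 1 \<le> l \<Longrightarrow> l < Suc m \<Longrightarrow>
   ((2*l-1,a),wzero,(2*l,a)) \<in> edges (gpow H (Suc m)) \<and> ((2*l,a),wzero,(2*l-1,a)) \<in> edges (gpow H (Suc m))"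
proof (induction m)
  case 0
  then show ?case by simp
next
  case (Suc m)
  show ?case
  proof (cases "l < Suc m")
    case True
    then show ?thesis using Suc by (simp add: compose_def)
  next
    case False
    then have "l = Suc m" using Suc by simp
    then show ?thesis using Suc.prems
      by (simp add: gpow_ncols compose_def)
  qed
qed

lemma height_pos: "complete (PNode lab cs) \<Longrightarrow> 1 \<le> height (PNode lab cs)"
  by (cases cs) auto

lemma tree_path:
  fixes H :: "'x tgraph" and E :: "'x edge set" and n :: nat
  assumes F1: "\<And>l c a e c' b. 1 \<le> l \<Longrightarrow> l \<le> n \<Longrightarrow> ((c,a),e,(c',b)) \<in> edges H \<Longrightarrow>
       ((c+2*(l-1),a),e,(c'+2*(l-1),b)) \<in> E"
  and F2: "\<And>l a. 1 \<le> l \<Longrightarrow> l < n \<Longrightarrow>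
       ((2*l-1,a),wzero,(2*l,a)) \<in> E \<and> ((2*l,a),wzero,(2*l-1,a)) \<in> E"
  shows "ptree_ok H' t \<Longrightarrow> complete t \<Longrightarrow> root_label t = Some (x,y) \<Longrightarrow> height t \<le> l \<Longrightarrow>
     l + height t \<le> n \<Longrightarrow> H' = H \<Longrightarrow>
     \<exists>es. walk E (2*l-1,x) es (2*l-1,y) \<and> path_weight es = ptree_weight t"
proof (induction H' t arbitrary: x y l rule: ptree_ok.induct)
  case (1 H)
  then show ?case by simp
next
  case (2 H0 x' y' cs)
  from "2.prems"(6) have [simp]: "H0 = H" .
  from "2.prems" have xy: "x' = x" "y' = y" by simp_all
  have ok: "children_ok H0 x y cs" using "2.prems"(1) xy by simp
  have cc: "cs \<noteq> []" using "2.prems"(2) by simp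
  have hp: "1 \<le> height (PNode (x', y') cs)" using "2.prems"(2) by (rule height_pos)
  from ok cc consider
      (a) e c where "c \<le> 1" "((c, x), e, (c, y)) \<in> edges H0" "cs = [(e, PTop)]"
    | (b) c c' u v e1 e2 cs' where "c \<le> 1" "c' \<le> 1" "c \<noteq> c'"
        "((c, x), e1, (c', u)) \<in> edges H0" "((c', v), e2, (c, y)) \<in> edges H0"
        "cs = [(wadd e1 e2, PNode (u, v) cs')]"
    | (c) z cs1 cs2 where "cs = [(wzero, PNode (x, z) cs1), (wzero, PNode (z, y) cs2)]"
    unfolding children_ok_def by blast
  then show ?case
  proof cases
    case a
    have l1: "1 \<le> l" "Suc l \<le> n" using "2.prems"(4,5) a by auto
    show ?thesis
    proof (cases "c = 0")
      case True
      have E1: "((2*l,x),e,(2*l,y)) \<in> E" using F1[of "Suc l" 0 x e 0 y] a True l1 by simp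
      have E2: "((2*l-1,x),wzero,(2*l,x)) \<in> E" "((2*l,y),wzero,(2*l-1,y)) \<in> E"
        using F2[of l] l1 by auto
      let ?es = "[((2*l-1,x),wzero,(2*l,x)), ((2*l,x),e,(2*l,y)), ((2*l,y),wzero,(2*l-1,y))]"
      have "walk E (2*l-1,x) ?es (2*l-1,y)" using E1 E2 by (intro walk_Cons' E1 E2 walk_Nil)
      moreover have "path_weight ?es = ptree_weight (PNode (x', y') cs)" using a by simp
      ultimately show ?thesis by blast
    next
      case False
      then have c1: "c = 1" using a by simp
      have eq: "1+2*(l-1) = 2*l-1" using l1 by simp
      have E1: "((2*l-1,x),e,(2*l-1,y)) \<in> E" using F1[of l 1 x e 1 y] a c1 l1 eq by simp
      have "walk E (2*l-1,x) [((2*l-1,x),e,(2*l-1,y))] (2*l-1,y)" using E1 by (intro walk_Cons' E1 walk_Nil)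
      moreover have "path_weight [((2*l-1,x),e,(2*l-1,y))] = ptree_weight (PNode (x', y') cs)" using a by simp
      ultimately show ?thesis by blast
    qed
  next
    case b
    let ?t1 = "PNode (u, v) cs'"
    have ok1: "ptree_ok H0 ?t1" and cp1: "complete ?t1" using "2.prems"(1,2) b by auto
    have h1: "1 \<le> height ?t1" using cp1 by (rule height_pos)
    have ht: "height (PNode (x', y') cs) = Suc (height ?t1)" using b by simp
    show ?thesis
    proof (cases "c = 1")
      case True
      then have c0: "c' = 0" using b by simp
      define l' where "l' = l - 2"
      have l': "l = Suc (Suc l')" using "2.prems"(4) ht h1 unfolding l'_def by linarith
      from "2.IH"[of "(wadd e1 e2, ?t1)" u v "Suc l'"] b ok1 cp1 ht "2.prems"(4,5) l'
      obtain es1 where es1: "walk E (Suc (2*l'),u) es1 (Suc (2*l'),v)" "path_weight es1 = ptree_weight ?t1"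
        by auto
      have E1: "((Suc (Suc (Suc (2*l'))),x),e1,(Suc (Suc (2*l')),u)) \<in> E" "((Suc (Suc (2*l')),v),e2,(Suc (Suc (Suc (2*l'))),y)) \<in> E"
        using F1[of l 1 x e1 0 u] F1[of l 0 v e2 1 y] b True c0 l' "2.prems"(5) by auto
      have E2: "((Suc (Suc (2*l')),u),wzero,(Suc (2*l'),u)) \<in> E" "((Suc (2*l'),v),wzero,(Suc (Suc (2*l')),v)) \<in> E"
        using F2[of "Suc l'"] l' "2.prems"(5) ht by auto
      let ?es = "((Suc (Suc (Suc (2*l'))),x),e1,(Suc (Suc (2*l')),u)) # ((Suc (Suc (2*l')),u),wzero,(Suc (2*l'),u)) # es1
          @ [((Suc (2*l'),v),wzero,(Suc (Suc (2*l')),v)), ((Suc (Suc (2*l')),v),e2,(Suc (Suc (Suc (2*l'))),y))]"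
      have "walk E (Suc (Suc (Suc (2*l'))),x) ?es (Suc (Suc (Suc (2*l'))),y)"
        by (rule walk_Cons'[OF E1(1) walk_Cons'[OF E2(1) walk_append[OF es1(1)]]])
           (intro walk_Cons' E1 E2 walk_Nil)
      moreover have "path_weight ?es = ptree_weight (PNode (x', y') cs)" using b es1 by (simp add: wac)
      moreover have eqc: "2*l-1 = Suc (Suc (Suc (2*l')))" using l' by simp
      ultimately show ?thesis unfolding eqc by blast
    next
      case False
      then have c0: "c = 0" "c' = 1" using b by auto
      define l' where "l' = l - 1"
      have l': "l = Suc l'" using "2.prems"(4) ht h1 unfolding l'_def by linarith
      from "2.IH"[of "(wadd e1 e2, ?t1)" u v "Suc l"] b ok1 cp1 ht "2.prems"(4,5) l'
      obtain es1 where es1: "walk E (Suc (Suc (Suc (2*l'))),u) es1 (Suc (Suc (Suc (2*l'))),v)" "path_weight es1 = ptree_weight ?t1"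
        by auto
      have E1: "((Suc (Suc (2*l')),x),e1,(Suc (Suc (Suc (2*l'))),u)) \<in> E" "((Suc (Suc (Suc (2*l'))),v),e2,(Suc (Suc (2*l')),y)) \<in> E"
        using F1[of "Suc l" 0 x e1 1 u] F1[of "Suc l" 1 v e2 0 y] b c0 l' "2.prems"(5) ht by auto
      have E2: "((Suc (2*l'),x),wzero,(Suc (Suc (2*l')),x)) \<in> E" "((Suc (Suc (2*l')),y),wzero,(Suc (2*l'),y)) \<in> E"
        using F2[of l] l' "2.prems"(5) ht by auto
      let ?es = "((Suc (2*l'),x),wzero,(Suc (Suc (2*l')),x)) # ((Suc (Suc (2*l')),x),e1,(Suc (Suc (Suc (2*l'))),u)) # es1
          @ [((Suc (Suc (Suc (2*l'))),v),e2,(Suc (Suc (2*l')),y)), ((Suc (Suc (2*l')),y),wzero,(Suc (2*l'),y))]"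
      have "walk E (Suc (2*l'),x) ?es (Suc (2*l'),y)"
        by (rule walk_Cons'[OF E2(1) walk_Cons'[OF E1(1) walk_append[OF es1(1)]]])
           (intro walk_Cons' E1 E2 walk_Nil)
      moreover have "path_weight ?es = ptree_weight (PNode (x', y') cs)" using b es1 by (simp add: wac)
      moreover have eqc: "2*l-1 = Suc (2*l')" using l' by simp
      ultimately show ?thesis unfolding eqc by blast
    qed
  next
    case c
    let ?t1 = "PNode (x, z) cs1" and ?t2 = "PNode (z, y) cs2"
    have ok1: "ptree_ok H0 ?t1" "ptree_ok H0 ?t2" and cp: "complete ?t1" "complete ?t2"
      using "2.prems"(1,2) c by auto
    have ht: "height ?t1 < height (PNode (x', y') cs)" "height ?t2 < height (PNode (x', y') cs)"
      using c by auto
    from "2.IH"[of "(wzero, ?t1)" x z l] c ok1 cp ht "2.prems"(4,5)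
    obtain es1 where es1: "walk E (2*l-1,x) es1 (2*l-1,z)" "path_weight es1 = ptree_weight ?t1"
      by fastforce
    from "2.IH"[of "(wzero, ?t2)" z y l] c ok1 cp ht "2.prems"(4,5)
    obtain es2 where es2: "walk E (2*l-1,z) es2 (2*l-1,y)" "path_weight es2 = ptree_weight ?t2"
      by fastforce
    have "walk E (2*l-1,x) (es1 @ es2) (2*l-1,y)" by (rule walk_append[OF es1(1) es2(1)])
    moreover have "path_weight (es1 @ es2) = ptree_weight (PNode (x', y') cs)" using c es1 es2 by simp
    ultimately show ?thesis by blast
  qed
qed


theorem mainTheorem14:
  fixes G :: "'x::finite tgraph" and t :: "'x ptree" and k :: nat and x y :: 'x and w :: weight
  assumes "transformation_graph G" and "2 \<le> ncols G"
    and "no_neg_cycle (edges G)"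
    and "1 \<le> k"
    and "ptree_ok (restrict_graph G) t" and "complete t"
    and "root_label t = Some (x, y)" and "ptree_weight t = w" and "height t \<le> k"
  shows "\<exists>es. walk (edges (gpow (restrict_graph G) (2 * k))) (2 * k - 1, x) es (2 * k - 1, y)
              \<and> wle (path_weight es) w"
proof -
  let ?H = "restrict_graph G"
  have nc: "ncols ?H = 2" by (simp add: restrict_graph_def)
  obtain m where m: "2 * k = Suc m" using assms(4) by (metis Suc_pred mult_pos_pos zero_less_numeral less_le_trans zero_less_one)
  have "\<exists>es. walk (edges (gpow ?H (Suc m))) (2*k-1,x) es (2*k-1,y) \<and> path_weight es = ptree_weight t"
  proof (rule tree_path[where H="?H" and n="2*k"])
    show "\<And>l c a e c' b. 1 \<le> l \<Longrightarrow> l \<le> 2*k \<Longrightarrow> ((c,a),e,(c',b)) \<in> edges ?H \<Longrightarrow>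
       ((c+2*(l-1),a),e,(c'+2*(l-1),b)) \<in> edges (gpow ?H (Suc m))"
      using gpow_F1[OF nc] m by simp
    show "\<And>l a. 1 \<le> l \<Longrightarrow> l < 2*k \<Longrightarrow>
       ((2*l-1,a),wzero,(2*l,a)) \<in> edges (gpow ?H (Suc m)) \<and> ((2*l,a),wzero,(2*l-1,a)) \<in> edges (gpow ?H (Suc m))"
      using gpow_F2[OF nc] m by simp
  qed (use assms in auto)
  then show ?thesis using m assms(8) by (auto simp: wle_def)
qed

end
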